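(* Let $X$ be a Banach space over $\mathbb{K}\in\{\mathbb{R},\mathbb{C}\}$ and $V\subset X$ an $n$-dimensional subspace ($n\ge1$). Let $A\in B(V)$ satisfy $\|A\|_{w,V}>0$, and let $A_0\in B(X,V)$ satisfy $A_0|_V=A$. Put $B_V(X,V)=\{L\in B(X,V): L|_V=0\}$ and $Z_A=\operatorname{span}[A_0]\oplus B_V(X,V)$. Then the numerical radius $\|\cdot\|_w$ (of operators in $Z_A$ regarded as operators $X\to X$) is a norm on $Z_A$, i.e. $\|L\|_w>0$ for every $L\in Z_A\setminus\{0\}$.
   Context: $B(X,V)$ denotes bounded linear operators $X\to V$, $B(V)=B(V,V)$. For $T\in B(X)$ the numerical radius is $\|T\|_w=\sup\{|x^*(Tx)|:x\in S_X,x^*\in S_{X^*},x^*(x)=1\}$. For $A\in B(V)$, $\|A\|_{w,V}=\sup\{|v^*(Av)|: v^*\in B_{V^*},v\in B_V,v^*(v)=1\}$ (the numerical radius computed in $V$). *)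

theory Defs
  imports "HOL-Analysis.Analysis"
begin

text \<open>The scalar field is any type of class
real_normed_field (complete); by the Gelfand-Mazur theorem these are exactly R and C.
The space is a real Banach space (type class banach) carrying a K-scalar
multiplication sm compatible with the real one and with the norm.\<close>

definition K_normed_space :: "('k::real_normed_field \<Rightarrow> 'a::real_normed_vector \<Rightarrow> 'a) \<Rightarrow> bool" where
  "K_normed_space sm \<longleftrightarrow> vector_space sm
     \<and> (\<forall>r x. sm (of_real r) x = r *\<^sub>R x)
     \<and> (\<forall>c x. norm (sm c x) = norm c * norm x)"

definition K_bounded_op :: "('k::real_normed_field \<Rightarrow> 'a::real_normed_vector \<Rightarrow> 'a) \<Rightarrow> ('a \<Rightarrow> 'a) \<Rightarrow> bool" where
  "K_bounded_op sm T \<longleftrightarrow> Vector_Spaces.linear sm sm T \<and> bounded_linear T"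

definition K_functional :: "('k::real_normed_field \<Rightarrow> 'a::real_normed_vector \<Rightarrow> 'a) \<Rightarrow> ('a \<Rightarrow> 'k) \<Rightarrow> bool" where
  "K_functional sm f \<longleftrightarrow> Vector_Spaces.linear sm (*) f \<and> bounded_linear f"

definition numrad :: "('k::real_normed_field \<Rightarrow> 'a::real_normed_vector \<Rightarrow> 'a) \<Rightarrow> ('a \<Rightarrow> 'a) \<Rightarrow> real" where
  "numrad sm T = Sup {norm (f (T x)) | x f.
      norm x = 1 \<and> K_functional sm f \<and> onorm f = 1 \<and> f x = 1}"

text \<open>Numerical radius of A in B(V), computed in V: functionals on V are
functions whose behaviour is only considered on V (K-linear on V, norm at most 1 on V).\<close>
definition numrad_on :: "('k::real_normed_field \<Rightarrow> 'a::real_normed_vector \<Rightarrow> 'a) \<Rightarrow> 'a set \<Rightarrow> ('a \<Rightarrow> 'a) \<Rightarrow> real" where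
  "numrad_on sm V A = Sup {norm (f (A v)) | v f.
      v \<in> V \<and> norm v \<le> 1
      \<and> (\<forall>u\<in>V. \<forall>w\<in>V. f (u + w) = f u + f w)
      \<and> (\<forall>c. \<forall>u\<in>V. f (sm c u) = c * f u)
      \<and> (\<forall>u\<in>V. norm (f u) \<le> norm u)
      \<and> f v = 1}"

text \<open>A in B(V): bounded K-linear map V -> V (values outside V irrelevant).\<close>
definition K_bounded_op_on :: "('k::real_normed_field \<Rightarrow> 'a::real_normed_vector \<Rightarrow> 'a) \<Rightarrow> 'a set \<Rightarrow> ('a \<Rightarrow> 'a) \<Rightarrow> bool" where
  "K_bounded_op_on sm V A \<longleftrightarrow> A ` V \<subseteq> V
     \<and> (\<forall>u\<in>V. \<forall>w\<in>V. A (u + w) = A u + A w)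
     \<and> (\<forall>c. \<forall>u\<in>V. A (sm c u) = sm c (A u))
     \<and> (\<exists>K. \<forall>u\<in>V. norm (A u) \<le> K * norm u)"

definition BV :: "('k::real_normed_field \<Rightarrow> 'a::real_normed_vector \<Rightarrow> 'a) \<Rightarrow> 'a set \<Rightarrow> ('a \<Rightarrow> 'a) set" where
  "BV sm V = {L. K_bounded_op sm L \<and> range L \<subseteq> V \<and> (\<forall>v\<in>V. L v = 0)}"

definition ZA :: "('k::real_normed_field \<Rightarrow> 'a::real_normed_vector \<Rightarrow> 'a) \<Rightarrow> 'a set \<Rightarrow> ('a \<Rightarrow> 'a) \<Rightarrow> ('a \<Rightarrow> 'a) set" where
  "ZA sm V A0 = {(\<lambda>x. sm c (A0 x) + L' x) | c L'. L' \<in> BV sm V}"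

end

theory Submission
  imports Defs "HOL-Computational_Algebra.Fundamental_Theorem_Algebra"
begin

definition ext_ok :: "'a::real_normed_vector set \<Rightarrow> ('a \<Rightarrow> real) \<Rightarrow> 'a set \<Rightarrow> ('a \<Rightarrow> real) \<Rightarrow> bool" where
  "ext_ok F u H h \<longleftrightarrow> subspace H \<and> F \<subseteq> H
   \<and> (\<forall>x\<in>H. \<forall>y\<in>H. h (x + y) = h x + h y)
   \<and> (\<forall>x\<in>H. \<forall>r. h (r *\<^sub>R x) = r * h x)
   \<and> (\<forall>x\<in>F. h x = u x) \<and> (\<forall>x\<in>H. h x \<le> norm x)"

lemma hb_step:
  fixes h :: "'a::real_normed_vector \<Rightarrow> real"
  assumes ok: "ext_ok F u H h" and x0: "x0 \<notin> H"
  shows "\<exists>H' h'. ext_ok F u H' h' \<and> H \<subseteq> H' \<and> x0 \<in> H' \<and> (\<forall>x\<in>H. h' x = h x)"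
proof -
  from ok have sH: "subspace H" and FH: "F \<subseteq> H"
    and add: "\<And>x y. x\<in>H \<Longrightarrow> y\<in>H \<Longrightarrow> h (x+y) = h x + h y"
    and hom: "\<And>x r. x\<in>H \<Longrightarrow> h (r *\<^sub>R x) = r * h x" and hF: "\<And>x. x \<in> F \<Longrightarrow> h x = u x"
    and dom: "\<And>x. x\<in>H \<Longrightarrow> h x \<le> norm x" unfolding ext_ok_def by auto
  define S where "S = {h y - norm (y - x0) | y. y \<in> H}"
  define c where "c = Sup S"
  have key: "h y - norm (y - x0) \<le> norm (w + x0) - h w" if "y \<in> H" "w \<in> H" for y w
  proof -
    have "h y + h w = h (y + w)" using add that by simp
    also have "... \<le> norm (y + w)" using dom that subspace_add[OF sH] by auto
    also have "... \<le> norm (y - x0) + norm (w + x0)" using norm_triangle_ineq[of "y - x0" "w + x0"] by simp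
    finally show ?thesis by simp
  qed
  have h0: "0 \<in> H" using sH subspace_0 by blast
  have Sne: "S \<noteq> {}" using h0 unfolding S_def by auto
  have Sbdd: "bdd_above S" unfolding S_def bdd_above_def using key[OF _ h0] by auto
  have c_ge: "h y - norm (y - x0) \<le> c" if "y \<in> H" for y
    unfolding c_def by (rule cSup_upper[OF _ Sbdd]) (use that S_def in auto)
  have c_le: "c \<le> norm (w + x0) - h w" if "w \<in> H" for w
    unfolding c_def by (rule cSup_least[OF Sne]) (use key that S_def in auto)
  define H' where "H' = {y + t *\<^sub>R x0 | y t. y \<in> H}"
  have uniq: "y1 = y2 \<and> t1 = t2" if "y1 \<in> H" "y2 \<in> H" "y1 + t1 *\<^sub>R x0 = y2 + t2 *\<^sub>R x0" for y1 y2 t1 t2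
  proof -
    have t: "t1 = t2"
    proof (rule ccontr)
      assume ne: "t1 \<noteq> t2"
      have "(t2 - t1) *\<^sub>R x0 = y1 - y2" using that(3) by (simp add: algebra_simps)
      hence "inverse (t2 - t1) *\<^sub>R ((t2 - t1) *\<^sub>R x0) = inverse (t2 - t1) *\<^sub>R (y1 - y2)" by simp
      hence "x0 = inverse (t2 - t1) *\<^sub>R (y1 - y2)" using ne by simp
      hence "x0 \<in> H" using sH that subspace_diff subspace_scale by metis
      with x0 show False by simp
    qed
    then show ?thesis using that by simp
  qed
  define h' where "h' z = (THE v. \<exists>y t. y \<in> H \<and> z = y + t *\<^sub>R x0 \<and> v = h y + t * c)" for z
  have h'_eq: "h' (y + t *\<^sub>R x0) = h y + t * c" if "y \<in> H" for y t
    unfolding h'_def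
  proof (rule the_equality)
    show "\<exists>ya ta. ya \<in> H \<and> y + t *\<^sub>R x0 = ya + ta *\<^sub>R x0 \<and> h y + t * c = h ya + ta * c"
      using that by blast
  next
    fix v assume "\<exists>ya ta. ya \<in> H \<and> y + t *\<^sub>R x0 = ya + ta *\<^sub>R x0 \<and> v = h ya + ta * c"
    then obtain ya ta where "ya \<in> H" "y + t *\<^sub>R x0 = ya + ta *\<^sub>R x0" "v = h ya + ta * c" by blast
    with uniq[OF that this(1,2)] show "v = h y + t * c" by simp
  qed
  have h'H: "h' y = h y" if "y \<in> H" for y
    using h'_eq[OF that, of 0] by simp
  have sH': "subspace H'"
    unfolding subspace_def H'_def
  proof (intro conjI ballI allI)
    show "0 \<in> {y + t *\<^sub>R x0 |y t. y \<in> H}" using h0 by (intro CollectI exI[of _ 0]) auto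
  next
    fix a b assume "a \<in> {y + t *\<^sub>R x0 |y t. y \<in> H}" "b \<in> {y + t *\<^sub>R x0 |y t. y \<in> H}"
    then obtain y1 t1 y2 t2 where "a = y1 + t1 *\<^sub>R x0" "y1 \<in> H" "b = y2 + t2 *\<^sub>R x0" "y2 \<in> H" by blast
    then show "a + b \<in> {y + t *\<^sub>R x0 |y t. y \<in> H}"
      by (intro CollectI exI[of _ "y1 + y2"] exI[of _ "t1 + t2"])
         (auto simp: algebra_simps subspace_add[OF sH])
  next
    fix r a assume "a \<in> {y + t *\<^sub>R x0 |y t. y \<in> H}"
    then obtain y1 t1 where "a = y1 + t1 *\<^sub>R x0" "y1 \<in> H" by blast
    then show "r *\<^sub>R a \<in> {y + t *\<^sub>R x0 |y t. y \<in> H}"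
      by (intro CollectI exI[of _ "r *\<^sub>R y1"] exI[of _ "r * t1"])
         (auto simp: algebra_simps subspace_scale[OF sH])
  qed
  have HH': "H \<subseteq> H'" unfolding H'_def
    by (rule subsetI, rule CollectI, rule_tac x=x in exI, rule exI[of _ 0]) simp
  have x0H': "x0 \<in> H'" unfolding H'_def using h0 by (auto intro!: exI[of _ 0] exI[of _ 1])
  have domH': "h' z \<le> norm z" if "z \<in> H'" for z
  proof -
    from that obtain y t where z: "z = y + t *\<^sub>R x0" "y \<in> H" unfolding H'_def by blast
    have "h y + t * c \<le> norm (y + t *\<^sub>R x0)"
    proof (cases "t = 0")
      case True then show ?thesis using dom z by simp
    next
      case False
      show ?thesis
      proof (cases "t > 0")
        case True
        define w where "w = inverse t *\<^sub>R y"
        have wH: "w \<in> H" unfolding w_def using subspace_scale[OF sH] z by blast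
        have yw: "y = t *\<^sub>R w" unfolding w_def using True by simp
        have "c \<le> norm (w + x0) - h w" using c_le[OF wH] .
        hence "t * c \<le> t * norm (w + x0) - t * h w" using True
          by (metis mult_left_mono less_imp_le right_diff_distrib)
        also have "t * norm (w + x0) = norm (y + t *\<^sub>R x0)"
          using True by (simp add: yw scaleR_add_right[symmetric])
        also have "t * h w = h y" using hom[OF wH] yw by simp
        finally show ?thesis by simp
      next
        case False2: False
        define s where "s = - t"
        have s0: "s > 0" using False False2 s_def by simp
        define w where "w = inverse s *\<^sub>R y"
        have wH: "w \<in> H" unfolding w_def using subspace_scale[OF sH] z by blast
        have yw: "y = s *\<^sub>R w" unfolding w_def using s0 by simp
        have "h w - norm (w - x0) \<le> c" using c_ge[OF wH] .
        hence "s * h w - s * norm (w - x0) \<le> s * c" using s0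
          by (metis mult_left_mono less_imp_le right_diff_distrib)
        also have "s * norm (w - x0) = norm (y + t *\<^sub>R x0)"
          using s0 by (simp add: yw s_def scaleR_diff_right[symmetric] norm_minus_commute)
        also have "s * h w = h y" using hom[OF wH] yw by simp
        finally show ?thesis by (simp add: s_def)
      qed
    qed
    then show ?thesis using z h'_eq by simp
  qed
  have addH': "h' (a + b) = h' a + h' b" if "a \<in> H'" "b \<in> H'" for a b
  proof -
    from that obtain y1 t1 y2 t2 where ab: "a = y1 + t1 *\<^sub>R x0" "y1 \<in> H" "b = y2 + t2 *\<^sub>R x0" "y2 \<in> H"
      unfolding H'_def by blast
    have e: "a + b = (y1 + y2) + (t1 + t2) *\<^sub>R x0" using ab by (simp add: algebra_simps)
    have "h' (a + b) = h (y1 + y2) + (t1 + t2) * c" unfolding e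
      by (rule h'_eq[OF subspace_add[OF sH ab(2) ab(4)]])
    then show ?thesis using ab h'_eq add by (simp add: algebra_simps)
  qed
  have homH': "h' (r *\<^sub>R a) = r * h' a" if "a \<in> H'" for a r
  proof -
    from that obtain y1 t1 where ab: "a = y1 + t1 *\<^sub>R x0" "y1 \<in> H"
      unfolding H'_def by blast
    have e: "r *\<^sub>R a = (r *\<^sub>R y1) + (r * t1) *\<^sub>R x0" using ab by (simp add: algebra_simps)
    have "h' (r *\<^sub>R a) = h (r *\<^sub>R y1) + (r * t1) * c" unfolding e
      by (rule h'_eq[OF subspace_scale[OF sH ab(2)]])
    then show ?thesis using ab h'_eq hom by (simp add: algebra_simps)
  qed
  have "ext_ok F u H' h'"
    unfolding ext_ok_def using sH' FH HH' addH' homH' hF h'H domH' by auto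
  then show ?thesis using HH' x0H' h'H by blast
qed

lemma ext_okD:
  assumes "ext_ok F u H h"
  shows "subspace H" "F \<subseteq> H" "\<And>x y. x\<in>H \<Longrightarrow> y\<in>H \<Longrightarrow> h (x + y) = h x + h y"
    "\<And>x r. x\<in>H \<Longrightarrow> h (r *\<^sub>R x) = r * h x" "\<And>x. x\<in>F \<Longrightarrow> h x = u x" "\<And>x. x\<in>H \<Longrightarrow> h x \<le> norm x"
  using assms unfolding ext_ok_def by auto

lemma real_HB:
  fixes u :: "'a::real_normed_vector \<Rightarrow> real"
  assumes ok0: "ext_ok F u F u"
  shows "\<exists>U. linear U \<and> (\<forall>x\<in>F. U x = u x) \<and> (\<forall>x. U x \<le> norm x)"
proof -
  define gr :: "'a set \<Rightarrow> ('a \<Rightarrow> real) \<Rightarrow> ('a \<times> real) set" where "gr H h = (\<lambda>x. (x, h x)) ` H" for H h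
  define A where "A = {gr H h | H h. ext_ok F u H h}"
  have "\<forall>C\<in>chains A. \<exists>U\<in>A. \<forall>X\<in>C. X \<subseteq> U"
  proof
    fix C assume C: "C \<in> chains A"
    show "\<exists>U\<in>A. \<forall>X\<in>C. X \<subseteq> U"
    proof (cases "C = {}")
      case True
      then show ?thesis using ok0 unfolding A_def by blast
    next
      case False
      have CA: "C \<subseteq> A" using C unfolding chains_def by blast
      have funct: "a = b" if "(x, a) \<in> \<Union>C" "(x, b) \<in> \<Union>C" for x a b
      proof -
        from that obtain X1 X2 where X: "X1 \<in> C" "X2 \<in> C" "(x,a) \<in> X1" "(x,b) \<in> X2" by blast
        from chainsD[OF C X(1,2)] obtain X where "X \<in> C" "(x,a) \<in> X" "(x,b) \<in> X" using X by blast
        then obtain H h where "X = gr H h" using CA unfolding A_def by blast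
        then show ?thesis using \<open>(x,a) \<in> X\<close> \<open>(x,b) \<in> X\<close> unfolding gr_def by auto
      qed
      define H where "H = fst ` \<Union>C"
      define h where "h x = (THE a. (x, a) \<in> \<Union>C)" for x
      have h_eq: "h x = a" if "(x, a) \<in> \<Union>C" for x a
        unfolding h_def by (rule the_equality[where P="\<lambda>a. (x, a) \<in> \<Union>C", OF that]) (rule funct[OF _ that])
      have sub: "H0 \<subseteq> H \<and> (\<forall>x\<in>H0. h x = h0 x)" if "gr H0 h0 \<in> C" for H0 h0
      proof (intro conjI subsetI ballI)
        fix x assume "x \<in> H0"
        then have m: "(x, h0 x) \<in> \<Union>C" using that unfolding gr_def by blast
        show "x \<in> H" unfolding H_def by (rule image_eqI[OF _ m]) simp
        show "h x = h0 x" by (rule h_eq[OF m])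
      qed
      have two: "\<exists>H0 h0. gr H0 h0 \<in> C \<and> ext_ok F u H0 h0 \<and> x1 \<in> H0 \<and> x2 \<in> H0"
        if "x1 \<in> H" "x2 \<in> H" for x1 x2
      proof -
        from that(1) obtain p1 where p1: "p1 \<in> \<Union>C" "x1 = fst p1" unfolding H_def by blast
        from that(2) obtain p2 where p2: "p2 \<in> \<Union>C" "x2 = fst p2" unfolding H_def by blast
        from p1 obtain X1 where X1: "X1 \<in> C" "(x1, snd p1) \<in> X1" by (cases p1) auto
        from p2 obtain X2 where X2: "X2 \<in> C" "(x2, snd p2) \<in> X2" by (cases p2) auto
        obtain a1 a2 where X: "X1 \<in> C" "X2 \<in> C" "(x1,a1) \<in> X1" "(x2,a2) \<in> X2" using X1 X2 by blast
        from chainsD[OF C X(1,2)] obtain X where XC: "X \<in> C" "(x1,a1) \<in> X" "(x2,a2) \<in> X" using X by blast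
        then obtain H0 h0 where "X = gr H0 h0" "ext_ok F u H0 h0" using CA unfolding A_def by blast
        then show ?thesis using XC unfolding gr_def by auto
      qed
      obtain X0 where "X0 \<in> C" using False by blast
      then obtain H00 h00 where X0: "gr H00 h00 \<in> C" "ext_ok F u H00 h00" using CA unfolding A_def by blast
      have okU: "ext_ok F u H h"
        unfolding ext_ok_def
      proof (intro conjI ballI allI)
        show "subspace H" unfolding subspace_def
        proof (intro conjI ballI allI)
          have "0 \<in> H00" using subspace_0[OF ext_okD(1)[OF X0(2)]] .
          then show "0 \<in> H" using sub[OF X0(1)] by blast
        next
          fix x y assume "x \<in> H" "y \<in> H"
          from two[OF this] obtain H0 h0 where "gr H0 h0 \<in> C" "ext_ok F u H0 h0" "x \<in> H0" "y \<in> H0" by blast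
          then show "x + y \<in> H" using sub[of H0 h0] subspace_add[OF ext_okD(1)[of F u H0 h0]] by blast
        next
          fix r x assume "x \<in> H"
          from two[OF this this] obtain H0 h0 where "gr H0 h0 \<in> C" "ext_ok F u H0 h0" "x \<in> H0" by blast
          then show "r *\<^sub>R x \<in> H" using sub[of H0 h0] subspace_scale[OF ext_okD(1)[of F u H0 h0]] by blast
        qed
      next
        show "F \<subseteq> H" using ext_okD(2)[OF X0(2)] sub[OF X0(1)] by blast
      next
        fix x y assume "x \<in> H" "y \<in> H"
        from two[OF this] obtain H0 h0 where H0: "gr H0 h0 \<in> C" "ext_ok F u H0 h0" "x \<in> H0" "y \<in> H0" by blast
        then have "x + y \<in> H0" using subspace_add[OF ext_okD(1)[OF H0(2)]] by blast
        then show "h (x + y) = h x + h y" using H0 sub[OF H0(1)] ext_okD(3)[OF H0(2)] by auto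
      next
        fix x r assume "x \<in> H"
        from two[OF this this] obtain H0 h0 where H0: "gr H0 h0 \<in> C" "ext_ok F u H0 h0" "x \<in> H0" by blast
        then have "r *\<^sub>R x \<in> H0" using subspace_scale[OF ext_okD(1)[OF H0(2)]] by blast
        then show "h (r *\<^sub>R x) = r * h x" using H0 sub[OF H0(1)] ext_okD(4)[OF H0(2)] by auto
      next
        fix x assume "x \<in> F"
        then show "h x = u x" using ext_okD(2,5)[OF X0(2)] sub[OF X0(1)] by auto
      next
        fix x assume "x \<in> H"
        from two[OF this this] obtain H0 h0 where H0: "gr H0 h0 \<in> C" "ext_ok F u H0 h0" "x \<in> H0" by blast
        then show "h x \<le> norm x" using sub[OF H0(1)] ext_okD(6)[OF H0(2)] by auto
      qed
      have "\<Union>C = gr H h"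
      proof
        show "\<Union>C \<subseteq> gr H h" unfolding gr_def H_def using h_eq by force
        show "gr H h \<subseteq> \<Union>C" unfolding gr_def H_def using h_eq by force
      qed
      then show ?thesis using okU unfolding A_def by blast
    qed
  qed
  from Zorn_Lemma2[OF this] obtain M where M: "M \<in> A" "\<And>X. X \<in> A \<Longrightarrow> M \<subseteq> X \<Longrightarrow> X = M" by blast
  then obtain H h where Mh: "M = gr H h" "ext_ok F u H h" unfolding A_def by blast
  have HU: "H = UNIV"
  proof (rule ccontr)
    assume "H \<noteq> UNIV"
    then obtain x0 where "x0 \<notin> H" by blast
    from hb_step[OF Mh(2) this] obtain H' h' where H': "ext_ok F u H' h'" "H \<subseteq> H'" "x0 \<in> H'" "\<forall>x\<in>H. h' x = h x" by blast
    have "gr H' h' \<in> A" using H' unfolding A_def by blast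
    moreover have "M \<subseteq> gr H' h'" using H' unfolding Mh gr_def by force
    ultimately have "gr H' h' = M" using M by blast
    moreover have "(x0, h' x0) \<in> gr H' h'" using H' unfolding gr_def by blast
    ultimately show False using \<open>x0 \<notin> H\<close> unfolding Mh gr_def by blast
  qed
  have "linear h"
    by (rule linearI) (use Mh(2) HU in \<open>auto simp: ext_ok_def\<close>)
  then show ?thesis using Mh(2) HU unfolding ext_ok_def by auto
qed

lemma map_poly_of_real_mult:
  "map_poly (of_real :: real \<Rightarrow> 'b::{real_algebra_1,comm_ring_1}) (p * q) = map_poly of_real p * map_poly of_real q"
  by (rule poly_eqI) (simp add: coeff_map_poly coeff_mult of_real_sum)

lemma map_poly_of_real_diff:
  "map_poly (of_real :: real \<Rightarrow> 'b::{real_algebra_1,comm_ring_1}) (p - q) = map_poly of_real p - map_poly of_real q"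
  by (rule poly_eqI) (simp add: coeff_map_poly)

lemma map_poly_of_real_power:
  "map_poly (of_real :: real \<Rightarrow> 'b::{real_algebra_1,comm_ring_1}) (p ^ n) = map_poly of_real p ^ n"
  by (induction n) (simp_all add: map_poly_of_real_mult)

lemma map_poly_of_real_prod:
  "map_poly (of_real :: real \<Rightarrow> 'b::{real_algebra_1,comm_ring_1}) (\<Prod>i\<in>I. f i) = (\<Prod>i\<in>I. map_poly of_real (f i))"
  by (induction I rule: infinite_finite_induct) (simp_all add: map_poly_of_real_mult)

lemma map_poly_of_real_inj:
  assumes "map_poly (of_real :: real \<Rightarrow> 'b::{real_algebra_1,comm_ring_1}) p = map_poly of_real q"
  shows "p = q"
proof (rule poly_eqI)
  fix n
  have "coeff (map_poly (of_real :: real \<Rightarrow> 'b) p) n = coeff (map_poly of_real q) n" using assms by simp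
  then show "coeff p n = coeff q n" by (simp add: coeff_map_poly)
qed

definition Qp :: "complex \<Rightarrow> real poly" where
  "Qp z = [: (cmod z)^2, - 2 * Re z, 1 :]"

lemma Qp_factor: "[:-z, 1:] * [:- cnj z, 1:] = map_poly complex_of_real (Qp z)"
proof -
  have "z * cnj z = (complex_of_real (cmod z))\<^sup>2" using complex_norm_square[of z] by simp
  moreover have "2 * complex_of_real (Re z) = z + cnj z" using complex_add_cnj[of z] by simp
  ultimately show ?thesis by (simp add: Qp_def map_poly_pCons algebra_simps)
qed

lemma poly_Qp_self: "poly (map_poly complex_of_real (Qp z)) z = 0"
proof -
  have "poly ([:-z, 1:] * [:- cnj z, 1:]) z = 0" by simp
  then show ?thesis by (simp only: Qp_factor)
qed

lemma real_poly_square_factor: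
  fixes G :: "real poly"
  assumes lc: "lead_coeff G = 1"
  obtains r where "G * G = (\<Prod>i<degree G. Qp (r i))"
    and "\<And>z. poly (map_poly complex_of_real G) z = 0 \<Longrightarrow> \<exists>i<degree G. r i = z"
proof -
  define pC where "pC = map_poly complex_of_real G"
  obtain root where rt: "smult (lead_coeff pC) (\<Prod>i<degree pC. [:-root i, 1:]) = pC"
    using complex_poly_decompose' by blast
  have dg: "degree pC = degree G" unfolding pC_def by (rule degree_map_poly) simp
  have lcC: "lead_coeff pC = 1" unfolding pC_def dg[unfolded pC_def] by (simp add: coeff_map_poly lc)
  have P1: "pC = (\<Prod>i<degree G. [:-root i, 1:])" using rt lcC dg by simp
  have realc: "\<And>n. coeff pC n \<in> \<real>" unfolding pC_def by (simp add: coeff_map_poly)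
  have P2: "pC = (\<Prod>i<degree G. [:- cnj (root i), 1:])"
  proof -
    have pe: "poly (\<Prod>i<degree G. [:- cnj (root i), 1:]) x = poly pC x" for x
    proof -
      have "poly (\<Prod>i<degree G. [:- cnj (root i), 1:]) x = (\<Prod>i<degree G. x - cnj (root i))"
        by (simp add: poly_prod)
      also have "\<dots> = cnj (\<Prod>i<degree G. cnj x - root i)" by simp
      also have "(\<Prod>i<degree G. cnj x - root i) = poly pC (cnj x)"
        by (subst P1) (simp add: poly_prod)
      also have "cnj (poly pC (cnj x)) = poly pC x"
        using poly_cnj_real[OF realc, of "cnj x"] by simp
      finally show ?thesis .
    qed
    have "poly (\<Prod>i<degree G. [:- cnj (root i), 1:]) = poly pC" by (rule ext) (rule pe)
    then show ?thesis unfolding poly_eq_poly_eq_iff by simp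
  qed
  have "map_poly complex_of_real (G * G) = pC * pC" unfolding pC_def by (simp add: map_poly_of_real_mult)
  also have "\<dots> = (\<Prod>i<degree G. [:-root i, 1:]) * (\<Prod>i<degree G. [:- cnj (root i), 1:])"
    by (rule arg_cong2[of _ _ _ _ "(*)", OF P1 P2])
  also have "\<dots> = (\<Prod>i<degree G. [:-root i, 1:] * [:- cnj (root i), 1:])"
    by (rule prod.distrib[symmetric])
  also have "\<dots> = map_poly complex_of_real (\<Prod>i<degree G. Qp (root i))"
    unfolding map_poly_of_real_prod Qp_factor ..
  finally have "G * G = (\<Prod>i<degree G. Qp (root i))" by (rule map_poly_of_real_inj)
  moreover have "\<exists>i<degree G. root i = z" if "poly (map_poly complex_of_real G) z = 0" for z
  proof -
    have "(\<Prod>i<degree G. z - root i) = 0" using that P1 unfolding pC_def by (simp add: poly_prod)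
    then show ?thesis by auto
  qed
  ultimately show ?thesis using that by blast
qed

lemma arith_contra:
  fixes m f1 :: real
  assumes m0: "0 < m" and mf: "m < f1" and H: "\<And>n. n \<ge> 1 \<Longrightarrow> f1 * m^(2*n-1) \<le> ((m/2)^n + m^n)^2"
  shows False
proof -
  define \<delta> where "\<delta> = (f1 - m) / (3 * m)"
  have d0: "\<delta> > 0" unfolding \<delta>_def using m0 mf by simp
  obtain n0 where n0: "(1/2::real)^n0 < \<delta>" using real_arch_pow_inv[OF d0, of "1/2"] by auto
  define n where "n = Suc n0"
  define t where "t = (1/2::real)^n"
  have t0: "0 < t" "t \<le> 1/2" unfolding t_def n_def
    using power_decreasing[of 1 "Suc n0" "1/2::real"] by auto
  have td: "t < \<delta>"
  proof -
    have "(1/2::real)^(Suc n0) \<le> (1/2)^n0" by (rule power_decreasing) auto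
    then show ?thesis using n0 unfolding t_def n_def by linarith
  qed
  define a where "a = m^n"
  have a0: "a > 0" unfolding a_def using m0 by simp
  have e1: "(m/2)^n = a * t" unfolding a_def t_def by (simp add: power_divide)
  have e2: "m^(2*n-1) * m = a^2" unfolding a_def n_def
    by (simp add: power2_eq_square power_add[symmetric] mult_2 mult_2_right algebra_simps)
  have "f1 * a^2 = f1 * m^(2*n-1) * m" using e2 by simp
  also have "\<dots> \<le> ((m/2)^n + m^n)^2 * m" using H[of n] m0 unfolding n_def by (intro mult_right_mono) auto
  also have "\<dots> = a^2 * (m * (1 + t)^2)" unfolding e1 a_def[symmetric] by (simp add: power2_eq_square algebra_simps)
  finally have "f1 \<le> m * (1 + t)^2" using a0 by (simp add: mult.commute)
  also have "\<dots> \<le> m * (1 + 3 * t)" using m0 t0 by (intro mult_left_mono) (auto simp: power2_eq_square algebra_simps)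
  also have "\<dots> < m * (1 + 3 * \<delta>)" using m0 td by simp
  also have "\<dots> = f1" unfolding \<delta>_def using m0 by (simp add: field_simps)
  finally show False by simp
qed

lemma prod_lower:
  fixes g :: "nat \<Rightarrow> real"
  assumes fin: "finite I" and i0: "i0 \<in> I" and ge: "\<And>i. i \<in> I \<Longrightarrow> m \<le> g i" and m0: "0 \<le> m"
  shows "g i0 * m ^ (card I - 1) \<le> prod g I"
proof -
  have "prod g I = g i0 * prod g (I - {i0})" using fin i0 by (rule prod.remove)
  moreover have "m ^ (card I - 1) \<le> prod g (I - {i0})"
  proof -
    have "(\<Prod>i\<in>I - {i0}. m) \<le> prod g (I - {i0})"
      by (rule prod_mono) (use ge m0 in auto)
    then show ?thesis using card_Diff_singleton[OF i0] by simp
  qed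
  moreover have "0 \<le> g i0" using ge[OF i0] m0 by simp
  ultimately show ?thesis by (simp add: mult_left_mono)
qed

lemma map_poly_of_real_add:
  "map_poly (of_real :: real \<Rightarrow> 'b::{real_algebra_1,comm_ring_1}) (p + q) = map_poly of_real p + map_poly of_real q"
  by (rule poly_eqI) (simp add: coeff_map_poly)

lemma ev_Qp: "poly (map_poly (of_real :: real \<Rightarrow> 'k::real_normed_field) (Qp z)) \<xi>
   = \<xi>*\<xi> - of_real (2 * Re z) * \<xi> + of_real ((cmod z)^2)"
  by (simp add: Qp_def map_poly_pCons algebra_simps)

lemma ostrowski_root:
  fixes \<xi> :: "'k::real_normed_field"
  shows "\<exists>z. \<xi>*\<xi> - of_real (2 * Re z) * \<xi> + of_real ((cmod z)^2) = 0"
proof -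
  define q where "q z = \<xi>*\<xi> - of_real (2 * Re z) * \<xi> + of_real ((cmod z)^2)" for z :: complex
  define f where "f z = norm (q z)" for z
  have cont: "continuous_on UNIV f" unfolding f_def q_def by (intro continuous_intros)
  have lowb: "(cmod z - norm \<xi>)^2 - 2 * (norm \<xi>)^2 \<le> f z" for z
  proof -
    have e: "(of_real ((cmod z)^2) :: 'k) = (q z - \<xi>*\<xi>) + of_real (2 * Re z) * \<xi>" by (simp add: q_def)
    have "(cmod z)^2 = norm (of_real ((cmod z)^2) :: 'k)" by (subst norm_of_real) simp
    also have "\<dots> \<le> norm (q z - \<xi>*\<xi>) + norm (of_real (2 * Re z) * \<xi>)" unfolding e by (rule norm_triangle_ineq)
    also have "norm (q z - \<xi>*\<xi>) \<le> f z + (norm \<xi>)^2" unfolding f_def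
      using norm_triangle_ineq4[of "q z" "\<xi>*\<xi>"] by (simp add: norm_mult power2_eq_square)
    also have "norm (of_real (2 * Re z) * \<xi>) \<le> 2 * cmod z * norm \<xi>"
      using abs_Re_le_cmod[of z] by (simp add: norm_mult mult_right_mono)
    finally have "(cmod z)^2 \<le> f z + (norm \<xi>)^2 + 2 * cmod z * norm \<xi>" by simp
    then show ?thesis by (simp add: power2_eq_square algebra_simps)
  qed
  define R where "R = 3 * norm \<xi> + 1"
  have f0: "f 0 = (norm \<xi>)^2" unfolding f_def q_def by (simp add: norm_mult power2_eq_square)
  have far: "f z > f 0" if "cmod z > R" for z
  proof -
    have "2 * norm \<xi> + 1 \<le> cmod z - norm \<xi>" using that unfolding R_def by simp
    then have "(2 * norm \<xi> + 1)^2 \<le> (cmod z - norm \<xi>)^2" by (rule power_mono) simp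
    then have a: "(2 * norm \<xi> + 1)^2 \<le> (cmod z - norm \<xi>)^2 - 2 * (norm \<xi>)^2 + 2 * (norm \<xi>)^2" by simp
    have b: "(2 * norm \<xi> + 1)^2 = 2 * (norm \<xi>)^2 + (norm \<xi>)^2 + (4 * norm \<xi> + 1 + (norm \<xi>)^2)"
      by (simp add: power2_eq_square algebra_simps)
    have c: "0 \<le> 4 * norm \<xi> + (norm \<xi>)^2" by simp
    show ?thesis using a b c lowb[of z] f0 by linarith
  qed
  have R0: "0 \<le> R" unfolding R_def by simp
  have "\<exists>x\<in>cball 0 R. \<forall>y\<in>cball 0 R. f x \<le> f y"
  proof (rule continuous_attains_inf[OF compact_cball])
    show "cball 0 R \<noteq> {}" using R0 by simp
    show "continuous_on (cball 0 R) f" by (rule continuous_on_subset[OF cont]) simp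
  qed
  then obtain w where w: "w \<in> cball 0 R" "\<And>y. y \<in> cball 0 R \<Longrightarrow> f w \<le> f y" by blast
  define m where "m = f w"
  have glob: "m \<le> f z" for z
  proof (cases "z \<in> cball 0 R")
    case True then show ?thesis using w m_def by simp
  next
    case False
    then have "f z > f 0" using far by simp
    moreover have "f w \<le> f 0" using w(2)[of 0] R0 by simp
    ultimately show ?thesis using m_def by simp
  qed
  show ?thesis
  proof (cases "m = 0")
    case True
    then have "q w = 0" using m_def f_def by simp
    then show ?thesis unfolding q_def by blast
  next
    case False
    have m0: "m > 0" using False m_def f_def by simp
    define S where "S = {z. f z = m}"
    have Ssub: "S \<subseteq> cball 0 R"
    proof
      fix z assume "z \<in> S"
      show "z \<in> cball 0 R"
      proof (rule ccontr)
        assume "z \<notin> cball 0 R"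
        then have "f z > f 0" using far by simp
        moreover have "f w \<le> f 0" using w(2)[of 0] R0 by simp
        ultimately show False using \<open>z \<in> S\<close> m_def S_def by simp
      qed
    qed
    have Scl: "closed S" unfolding S_def by (rule closed_Collect_eq[OF cont continuous_on_const])
    have Scomp: "compact S" unfolding compact_eq_bounded_closed
      using Scl bounded_subset[OF bounded_cball Ssub] by simp
    have Sne: "S \<noteq> {}" using m_def S_def by auto
    obtain z0 where z0: "z0 \<in> S" "\<And>y. y \<in> S \<Longrightarrow> cmod y \<le> cmod z0"
      using continuous_attains_sup[OF Scomp Sne continuous_on_norm_id] by blast
    have fz0: "f z0 = m" using z0 S_def by simp
    define \<epsilon> where "\<epsilon> = m / 2"
    have e0: "\<epsilon> > 0" unfolding \<epsilon>_def using m0 by simp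
    define z1 where "z1 = Complex (Re z0) (sqrt ((Im z0)^2 + \<epsilon>))"
    have Rez1: "Re z1 = Re z0" unfolding z1_def by simp
    have cz1: "(cmod z1)^2 = (cmod z0)^2 + \<epsilon>" unfolding z1_def cmod_power2 using e0 by simp
    have "cmod z1 > cmod z0"
    proof -
      have "(cmod z0)^2 < (cmod z1)^2" using cz1 e0 by simp
      then show ?thesis by (simp add: power_less_imp_less_base)
    qed
    then have "z1 \<notin> S" using z0 by force
    then have fz1: "f z1 > m" using glob[of z1] S_def by force
    have Qz1: "Qp z1 = Qp z0 + [:\<epsilon>:]" unfolding Qp_def using Rez1 cz1 by simp
    have pz1: "poly (map_poly complex_of_real (Qp z0)) z1 = - of_real \<epsilon>"
    proof -
      have "poly (map_poly complex_of_real (Qp z1)) z1 = 0" by (rule poly_Qp_self)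
      then have "complex_of_real \<epsilon> + poly (map_poly complex_of_real (Qp z0)) z1 = 0"
        unfolding Qz1 map_poly_of_real_add by (simp add: map_poly_pCons algebra_simps)
      then show ?thesis by (metis add.commute eq_neg_iff_add_eq_0)
    qed
    have key: "f z1 * m^(2*n-1) \<le> ((m/2)^n + m^n)^2" if n1: "n \<ge> 1" for n
    proof -
      define G where "G = [: - ((-\<epsilon>)^n) :] + Qp z0 ^ n"
      have QpD: "degree (Qp z0) = 2" "lead_coeff (Qp z0) = 1" "Qp z0 \<noteq> 0" unfolding Qp_def by auto
      have dP: "degree (Qp z0 ^ n) = 2 * n" using degree_power_eq[OF QpD(3), of n] QpD(1) by simp
      have degG: "degree G = 2 * n" unfolding G_def using dP n1 by (subst degree_add_eq_right) auto
      have lp: "lead_coeff (Qp z0 ^ n) = 1" by (simp add: lead_coeff_power QpD(2))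
      have "lead_coeff G = lead_coeff (Qp z0 ^ n)" unfolding G_def
        by (rule lead_coeff_add_le) (use dP n1 in simp)
      with lp have lcG: "lead_coeff G = 1" by simp
      obtain r where r: "G * G = (\<Prod>i<degree G. Qp (r i))"
        and rr: "\<And>z. poly (map_poly complex_of_real G) z = 0 \<Longrightarrow> \<exists>i<degree G. r i = z"
        using real_poly_square_factor[OF lcG] by blast
      have "poly (map_poly complex_of_real G) z1 = 0"
        unfolding G_def map_poly_of_real_add map_poly_of_real_power
        by (simp add: pz1 map_poly_pCons)
      then obtain i0 where i0: "i0 < degree G" "r i0 = z1" using rr by blast
      define ev where "ev P = poly (map_poly (of_real :: real \<Rightarrow> 'k) P) \<xi>" for P
      have evGG: "ev G * ev G = (\<Prod>i<degree G. q (r i))"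
      proof -
        have "ev G * ev G = ev (G * G)" unfolding ev_def map_poly_of_real_mult by simp
        also have "\<dots> = (\<Prod>i<degree G. ev (Qp (r i)))" unfolding r ev_def map_poly_of_real_prod
          by (simp add: poly_prod)
        also have "\<dots> = (\<Prod>i<degree G. q (r i))" unfolding ev_def ev_Qp q_def ..
        finally show ?thesis .
      qed
      have "f z1 * m^(2*n-1) \<le> (\<Prod>i<degree G. f (r i))"
        using prod_lower[of "{..<degree G}" i0 m "\<lambda>i. f (r i)"] i0 glob m0 degG by simp
      also have "\<dots> = norm (ev G)^2" unfolding f_def prod_norm evGG[symmetric] by (simp add: norm_mult power2_eq_square)
      also have "norm (ev G) \<le> (m/2)^n + m^n"
      proof -
        have "ev G = - of_real ((-\<epsilon>)^n) + (q z0)^n"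
          unfolding ev_def G_def map_poly_of_real_add map_poly_of_real_power
          by (simp add: map_poly_pCons ev_Qp[unfolded] q_def)
        then have "norm (ev G) \<le> norm (of_real ((-\<epsilon>)^n) :: 'k) + norm ((q z0)^n)"
          using norm_triangle_ineq[of "- of_real ((-\<epsilon>)^n) :: 'k" "(q z0)^n"] by simp
        also have "\<dots> = \<epsilon>^n + m^n" using fz0 e0 unfolding f_def by (simp add: norm_power power_abs)
        finally show ?thesis unfolding \<epsilon>_def .
      qed
      then have "norm (ev G)^2 \<le> ((m/2)^n + m^n)^2" by (rule power_mono) simp
      finally show ?thesis .
    qed
    show ?thesis using arith_contra[OF m0 fz1 key] by blast
  qed
qed

lemma classify_elem:
  fixes \<xi> :: "'k::real_normed_field"
  shows "(\<exists>r. \<xi> = of_real r) \<or> (\<exists>j a b. j * j = -1 \<and> \<xi> = of_real a + of_real b * j)"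
proof -
  obtain z where z: "\<xi>*\<xi> - of_real (2 * Re z) * \<xi> + of_real ((cmod z)^2) = 0"
    using ostrowski_root by blast
  define a where "a = Re z"
  define b where "b = Im z"
  have "(\<xi> - of_real a) * (\<xi> - of_real a) = \<xi>*\<xi> - of_real (2 * Re z) * \<xi> + of_real ((cmod z)^2) - of_real (b^2)"
    unfolding a_def b_def cmod_power2 by (simp add: algebra_simps power2_eq_square)
  then have sq: "(\<xi> - of_real a) * (\<xi> - of_real a) = - of_real (b^2)" using z by simp
  show ?thesis
  proof (cases "b = 0")
    case True
    then have "\<xi> = of_real a" using sq by simp
    then show ?thesis by blast
  next
    case False
    define j where "j = (\<xi> - of_real a) / of_real b"
    have "j * j = ((\<xi> - of_real a) * (\<xi> - of_real a)) / (of_real b * of_real b)" unfolding j_def by simp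
    also have "\<dots> = -1" unfolding sq using False by (simp add: power2_eq_square)
    finally have jj: "j * j = -1" .
    have "\<xi> = of_real a + of_real b * j" unfolding j_def using False by simp
    then show ?thesis using jj by blast
  qed
qed

lemma classify_field:
  "(\<forall>a::'k::real_normed_field. \<exists>r. a = of_real r) \<or>
   (\<exists>j::'k. j * j = -1 \<and> (\<forall>a. \<exists>r s. a = of_real r + of_real s * j))"
proof (cases "\<forall>a::'k. \<exists>r. a = of_real r")
  case True then show ?thesis by blast
next
  case False
  then obtain \<xi> :: 'k where "\<not> (\<exists>r. \<xi> = of_real r)" by blast
  then obtain j a b where j: "j * j = (-1::'k)" by (meson classify_elem)
  have "\<exists>r s. x = of_real r + of_real s * j" for x :: 'k
  proof -
    from classify_elem[of x] show ?thesis
    proof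
      assume "\<exists>r. x = of_real r" then show ?thesis by (metis add_0_right mult_zero_left of_real_0)
    next
      assume "\<exists>j' a b. j' * j' = -1 \<and> x = of_real a + of_real b * j'"
      then obtain j' a b where j': "j' * j' = (-1::'k)" "x = of_real a + of_real b * j'" by blast
      have "(j' - j) * (j' + j) = 0" using j j'(1) by (simp add: algebra_simps)
      then have "j' = j \<or> j' = - j" by (auto simp: eq_neg_iff_add_eq_0)
      then show ?thesis
      proof
        assume "j' = j" then show ?thesis using j' by blast
      next
        assume "j' = - j" then have "x = of_real a + of_real (- b) * j" using j' by simp
        then show ?thesis by blast
      qed
    qed
  qed
  then show ?thesis using j by blast
qed

lemma j_zero:
  fixes j :: "'k::real_normed_field"
  assumes jj: "j * j = -1" and e: "of_real r + of_real s * j = 0"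
  shows "r = 0 \<and> s = 0"
proof (cases "s = 0")
  case True then show ?thesis using e by simp
next
  case False
  have "of_real s * j = - of_real r" using e by (simp add: eq_neg_iff_add_eq_0 add.commute)
  then have "j = of_real (- r / s)" using False by (simp add: field_simps)
  then have "of_real ((- r / s) * (- r / s)) = (-1::'k)" using jj by simp
  then have "(- r / s) * (- r / s) = -1" by (metis of_real_eq_iff of_real_minus of_real_1)
  moreover have "0 \<le> (- r / s) * (- r / s)" by simp
  ultimately show ?thesis by simp
qed

lemma j_unique:
  fixes j :: "'k::real_normed_field"
  assumes jj: "j * j = -1" and e: "of_real r1 + of_real s1 * j = of_real r2 + of_real s2 * j"
  shows "r1 = r2 \<and> s1 = s2"
proof -
  have "of_real (r1 - r2) + of_real (s1 - s2) * j = (0::'k)" using e by (simp add: algebra_simps)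
  from j_zero[OF jj this] show ?thesis by simp
qed

lemma j_norm1:
  fixes j :: "'k::real_normed_field"
  assumes jj: "j * j = -1"
  shows "norm j = 1"
proof -
  have "norm (j * j) = 1" using jj by simp
  then have "norm j * norm j = 1" by (simp add: norm_mult)
  then have "(norm j - 1) * (norm j + 1) = 0" by (simp add: algebra_simps)
  moreover have "norm j + 1 \<noteq> 0" by (metis add_nonneg_pos norm_ge_zero zero_less_one less_irrefl)
  ultimately show ?thesis by simp
qed

lemma j_pow:
  fixes j :: "'k::real_normed_field"
  assumes jj: "j * j = -1" and rs: "r^2 + s^2 = 1"
  shows "\<exists>p q. (of_real r + of_real s * j)^k = of_real p + of_real q * j \<and> p^2 + q^2 = 1"
proof (induction k)
  case 0
  show ?case by (rule exI[of _ 1], rule exI[of _ 0]) simp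
next
  case (Suc k)
  then obtain p q where pq: "(of_real r + of_real s * j)^k = of_real p + of_real q * j" "p^2 + q^2 = 1" by blast
  have "(of_real r + of_real s * j)^(Suc k) = (of_real p + of_real q * j) * (of_real r + of_real s * j)"
    using pq by (simp add: mult.commute)
  also have "\<dots> = of_real (p * r - q * s) + of_real (p * s + q * r) * j"
  proof -
    have "(of_real p + of_real q * j) * (of_real r + of_real s * j) =
       of_real (p * r) + of_real (q * s) * (j * j) + of_real (p * s + q * r) * j" by (simp add: algebra_simps)
    then show ?thesis using jj by (simp add: algebra_simps)
  qed
  finally have e: "(of_real r + of_real s * j)^(Suc k) = of_real (p * r - q * s) + of_real (p * s + q * r) * j" .
  have "(p * r - q * s)^2 + (p * s + q * r)^2 = (p^2 + q^2) * (r^2 + s^2)" by (simp add: power2_eq_square algebra_simps)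
  then have "(p * r - q * s)^2 + (p * s + q * r)^2 = 1" using pq(2) rs by simp
  then show ?case using e by blast
qed

lemma j_unit_norm_le:
  fixes j :: "'k::real_normed_field"
  assumes jj: "j * j = -1" and rs: "r^2 + s^2 = 1"
  shows "norm (of_real r + of_real s * j) \<le> 1"
proof (rule ccontr)
  define e where "e = of_real r + of_real s * j"
  assume "\<not> norm (of_real r + of_real s * j) \<le> 1"
  then have "1 < norm e" unfolding e_def by simp
  then obtain k where k: "2 < norm e ^ k" using real_arch_pow by blast
  obtain p q where pq: "e^k = of_real p + of_real q * j" "p^2 + q^2 = 1" using j_pow[OF jj rs, of k] unfolding e_def by blast
  have "p^2 \<le> 1" "q^2 \<le> 1" using pq(2) zero_le_power2[of p] zero_le_power2[of q] by linarith+
  then have "\<bar>p\<bar> \<le> 1" "\<bar>q\<bar> \<le> 1" by (simp_all add: abs_square_le_1)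
  have "norm e ^ k = norm (of_real p + of_real q * j :: 'k)" using pq(1) by (metis norm_power)
  also have "\<dots> \<le> \<bar>p\<bar> + \<bar>q\<bar>" using norm_triangle_ineq[of "of_real p :: 'k" "of_real q * j"] j_norm1[OF jj]
    by (simp add: norm_mult)
  also have "\<dots> \<le> 2" using \<open>\<bar>p\<bar> \<le> 1\<close> \<open>\<bar>q\<bar> \<le> 1\<close> by simp
  finally show False using k by simp
qed

lemma j_unit_norm:
  fixes j :: "'k::real_normed_field"
  assumes jj: "j * j = -1" and rs: "r^2 + s^2 = 1"
  shows "norm (of_real r + of_real s * j) = 1"
proof -
  have rs': "r^2 + (-s)^2 = 1" using rs by simp
  have "(of_real r + of_real s * j) * (of_real r + of_real (-s) * j) = of_real (r^2 + s^2) - of_real (s^2) * (j * j + 1)"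
    by (simp add: algebra_simps power2_eq_square)
  also have "\<dots> = 1" using jj rs by simp
  finally have "norm (of_real r + of_real s * j :: 'k) * norm (of_real r + of_real (-s) * j :: 'k) = 1"
    by (metis norm_mult norm_one)
  moreover have "norm (of_real r + of_real s * j :: 'k) \<le> 1" by (rule j_unit_norm_le[OF jj rs])
  moreover have "norm (of_real r + of_real (-s) * j :: 'k) \<le> 1" by (rule j_unit_norm_le[OF jj rs'])
  ultimately show ?thesis
  proof -
    assume ab: "norm (of_real r + of_real s * j :: 'k) * norm (of_real r + of_real (-s) * j :: 'k) = 1"
      and a1: "norm (of_real r + of_real s * j :: 'k) \<le> 1" and b1: "norm (of_real r + of_real (-s) * j :: 'k) \<le> 1"
    have "norm (of_real r + of_real s * j :: 'k) * norm (of_real r + of_real (-s) * j :: 'k)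
        \<le> norm (of_real r + of_real s * j :: 'k) * 1" by (rule mult_left_mono[OF b1 norm_ge_zero])
    then show ?thesis using ab a1 by simp
  qed
qed

lemma j_re_le:
  fixes j :: "'k::real_normed_field"
  assumes jj: "j * j = -1"
  shows "\<bar>r\<bar> \<le> norm (of_real r + of_real s * j)"
proof (cases "r^2 + s^2 = 0")
  case True then show ?thesis by simp
next
  case False
  define \<rho> where "\<rho> = sqrt (r^2 + s^2)"
  have "r^2 + s^2 \<ge> 0" by simp
  then have "r^2 + s^2 > 0" using False by linarith
  then have p: "\<rho> > 0" unfolding \<rho>_def by simp
  have "(r/\<rho>)^2 + (s/\<rho>)^2 = (r^2 + s^2) / \<rho>^2" by (simp add: power_divide add_divide_distrib)
  also have "\<dots> = 1" unfolding \<rho>_def using False by (simp add: add_nonneg_nonneg)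
  finally have u: "norm (of_real (r/\<rho>) + of_real (s/\<rho>) * j :: 'k) = 1" by (rule j_unit_norm[OF jj])
  have "(of_real r + of_real s * j :: 'k) = of_real \<rho> * (of_real (r/\<rho>) + of_real (s/\<rho>) * j)"
    using p by (simp add: algebra_simps)
  then have "norm (of_real r + of_real s * j :: 'k) = \<rho>" using u p by (simp add: norm_mult)
  moreover have "\<bar>r\<bar> \<le> \<rho>"
  proof -
    have "sqrt (r^2) \<le> sqrt (r^2 + s^2)" by (rule real_sqrt_le_mono) simp
    then show ?thesis unfolding \<rho>_def real_sqrt_abs .
  qed
  ultimately show ?thesis by simp
qed

lemma vs_mult: "vector_space ((*) :: 'k::field \<Rightarrow> 'k \<Rightarrow> 'k)"
  by unfold_locales (simp_all add: algebra_simps)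

lemma real_HB_abs:
  fixes u :: "'a::real_normed_vector \<Rightarrow> real"
  assumes W: "subspace W" and add: "\<And>x y. x \<in> W \<Longrightarrow> y \<in> W \<Longrightarrow> u (x + y) = u x + u y"
    and hom: "\<And>x r. x \<in> W \<Longrightarrow> u (r *\<^sub>R x) = r * u x" and bd: "\<And>x. x \<in> W \<Longrightarrow> \<bar>u x\<bar> \<le> norm x"
  shows "\<exists>U. linear U \<and> (\<forall>x\<in>W. U x = u x) \<and> (\<forall>x. \<bar>U x\<bar> \<le> norm x)"
proof -
  have "ext_ok W u W u" unfolding ext_ok_def using W add hom bd abs_le_D1 by blast
  from real_HB[OF this] obtain U where U: "linear U" "\<forall>x\<in>W. U x = u x" "\<forall>x. U x \<le> norm x" by blast
  have "\<bar>U x\<bar> \<le> norm x" for x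
  proof -
    have "U (- x) = - U x" using linear_neg[OF U(1)] .
    then have "- U x \<le> norm x" using U(3)[rule_format, of "- x"] by simp
    then show ?thesis using U(3) by (simp add: abs_le_iff)
  qed
  then show ?thesis using U by blast
qed

lemma j_mult_id:
  fixes j :: "'k::real_normed_field"
  assumes jj: "j * j = -1"
  shows "(of_real r + of_real s * j) * (of_real a - of_real b * j) = of_real (r*a + s*b) - of_real (- s*a + r*b) * j"
proof -
  have "(of_real r + of_real s * j) * (of_real a - of_real b * j) =
     of_real (r*a) - of_real (r*b) * j + of_real (s*a) * j - of_real (s*b) * (j*j)"
    by (simp add: algebra_simps)
  also have "\<dots> = of_real (r*a + s*b) - of_real (- s*a + r*b) * j" unfolding jj by (simp add: algebra_simps)
  finally show ?thesis .
qed

lemma K_HB: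
  fixes sm :: "'k::real_normed_field \<Rightarrow> 'a::real_normed_vector \<Rightarrow> 'a" and g :: "'a \<Rightarrow> 'k"
  assumes KN: "K_normed_space sm" and W: "module.subspace sm W"
    and gadd: "\<And>u w. u \<in> W \<Longrightarrow> w \<in> W \<Longrightarrow> g (u + w) = g u + g w"
    and ghom: "\<And>c u. u \<in> W \<Longrightarrow> g (sm c u) = c * g u"
    and gb: "\<And>u. u \<in> W \<Longrightarrow> norm (g u) \<le> norm u"
  shows "\<exists>f. K_functional sm f \<and> (\<forall>w\<in>W. f w = g w) \<and> (\<forall>x. norm (f x) \<le> norm x)"
proof -
  have vs: "vector_space sm" and smr: "\<And>r x. sm (of_real r) x = r *\<^sub>R x"
    and smn: "\<And>c x. norm (sm c x) = norm c * norm x"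
    using KN unfolding K_normed_space_def by auto
  interpret V: vector_space sm by (rule vs)
  have W0: "0 \<in> W" and Wadd: "\<And>x y. x\<in>W \<Longrightarrow> y\<in>W \<Longrightarrow> x+y\<in>W" and Wsc: "\<And>c x. x\<in>W \<Longrightarrow> sm c x \<in> W"
    using W unfolding V.subspace_def by auto
  have Wr: "subspace W" unfolding subspace_def
    using W0 Wadd Wsc smr by metis
  have ghr: "g (r *\<^sub>R u) = of_real r * g u" if "u \<in> W" for u r
    using ghom[OF that, of "of_real r"] smr by simp
  have Kfun: "K_functional sm f" if fadd: "\<And>x y. f (x + y) = f x + f y"
    and fhom: "\<And>c x. f (sm c x) = c * f x" and fb: "\<And>x. norm (f x) \<le> norm x" for f :: "'a \<Rightarrow> 'k"
  proof -
    have "Vector_Spaces.linear sm (*) f" unfolding Vector_Spaces.linear_iff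
      using vs vs_mult fadd fhom by blast
    moreover have "bounded_linear f"
    proof (rule bounded_linear_intro[where K=1])
      show "f (x + y) = f x + f y" for x y by (rule fadd)
      show "f (r *\<^sub>R x) = r *\<^sub>R f x" for r x using fhom[of "of_real r" x] smr by (simp add: scaleR_conv_of_real)
      show "norm (f x) \<le> norm x * 1" for x using fb by simp
    qed
    ultimately show ?thesis unfolding K_functional_def by blast
  qed
  from classify_field[where 'k='k] show ?thesis
  proof
    assume allr: "\<forall>a::'k. \<exists>r. a = of_real r"
    define re where "re a = (SOME r. a = of_real r)" for a :: 'k
    have reA: "of_real (re a) = a" for a unfolding re_def by (metis (mono_tags) someI_ex allr)
    have re_of: "re (of_real r) = r" for r using reA[of "of_real r"] by (metis of_real_eq_iff)
    define u where "u w = re (g w)" for w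
    have uadd: "u (x + y) = u x + u y" if "x \<in> W" "y \<in> W" for x y
    proof -
      have e: "g (x + y) = of_real (u x + u y)" unfolding u_def using gadd[OF that] reA by (metis of_real_add)
      show ?thesis using arg_cong[OF e, of re] unfolding re_of by (simp only: u_def)
    qed
    have uhom: "u (r *\<^sub>R x) = r * u x" if "x \<in> W" for x r
    proof -
      have e: "g (r *\<^sub>R x) = of_real (r * u x)" unfolding u_def using ghr[OF that] reA by (metis of_real_mult)
      show ?thesis using arg_cong[OF e, of re] unfolding re_of by (simp only: u_def)
    qed
    have ub: "\<bar>u x\<bar> \<le> norm x" if "x \<in> W" for x
      using gb[OF that] reA[of "g x"] unfolding u_def by (metis norm_of_real)
    obtain U where U: "linear U" "\<forall>x\<in>W. U x = u x" "\<forall>x. \<bar>U x\<bar> \<le> norm x"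
      using real_HB_abs[OF Wr uadd uhom ub] by blast
    define f where "f x = (of_real (U x) :: 'k)" for x
    have fadd: "f (x + y) = f x + f y" for x y unfolding f_def using linear_add[OF U(1)] by simp
    have fhom: "f (sm c x) = c * f x" for c x
    proof -
      have "sm c x = re c *\<^sub>R x" using smr[of "re c" x] reA[of c] by simp
      then show ?thesis unfolding f_def using linear_scale[OF U(1)] reA[of c] by (metis of_real_mult real_scaleR_def)
    qed
    have fb: "norm (f x) \<le> norm x" for x unfolding f_def using U(3) by simp
    have fext: "\<forall>w\<in>W. f w = g w" unfolding f_def using U(2) reA u_def by simp
    show ?thesis using Kfun[OF fadd fhom fb] fext fb by blast
  next
    assume "\<exists>j::'k. j * j = -1 \<and> (\<forall>a. \<exists>r s. a = of_real r + of_real s * j)"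
    then obtain j :: 'k where jj: "j * j = -1" and jrep: "\<And>a. \<exists>r s. a = of_real r + of_real s * j" by blast
    define re where "re a = fst (SOME p. a = of_real (fst p) + of_real (snd p) * j)" for a
    define im where "im a = snd (SOME p. a = of_real (fst p) + of_real (snd p) * j)" for a
    have rep: "a = of_real (re a) + of_real (im a) * j" for a
    proof -
      have "\<exists>p. a = of_real (fst p) + of_real (snd p) * j" using jrep[of a] by auto
      then show ?thesis unfolding re_def im_def by (rule someI_ex)
    qed
    have uniq: "re a = r \<and> im a = s" if "a = of_real r + of_real s * j" for a r s
      using j_unique[OF jj, of "re a" "im a" r s] rep[of a] that by simp
    have re_add: "re (a + b) = re a + re b" for a b
    proof -
      have "a + b = of_real (re a + re b) + of_real (im a + im b) * j"
        using rep[of a] rep[of b] by (simp add: algebra_simps)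
      then show ?thesis using uniq by blast
    qed
    have re_scal: "re (of_real t * a) = t * re a" for t a
    proof -
      have "of_real t * a = of_real (t * re a) + of_real (t * im a) * j"
        by (subst rep[of a]) (simp add: algebra_simps)
      then show ?thesis using uniq by blast
    qed
    have re_j: "re (j * a) = - im a" for a
    proof -
      have "j * a = of_real (re a) * j + of_real (im a) * (j * j)"
        by (subst rep[of a]) (simp add: algebra_simps)
      also have "\<dots> = of_real (- im a) + of_real (re a) * j" unfolding jj by simp
      finally show ?thesis using uniq by blast
    qed
    have re_le: "\<bar>re a\<bar> \<le> norm a" for a
      using j_re_le[OF jj, of "re a" "im a"] rep[of a] by simp
    define u where "u w = re (g w)" for w
    have uadd: "u (x + y) = u x + u y" if "x \<in> W" "y \<in> W" for x y
      unfolding u_def gadd[OF that] re_add ..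
    have uhom: "u (r *\<^sub>R x) = r * u x" if "x \<in> W" for x r
      unfolding u_def ghr[OF that] re_scal ..
    have ub: "\<bar>u x\<bar> \<le> norm x" if "x \<in> W" for x
      unfolding u_def using re_le[of "g x"] gb[OF that] by linarith
    obtain U where U: "linear U" "\<forall>x\<in>W. U x = u x" "\<forall>x. \<bar>U x\<bar> \<le> norm x"
      using real_HB_abs[OF Wr uadd uhom ub] by blast
    have Uadd: "U (x + y) = U x + U y" for x y using linear_add[OF U(1)] .
    have Usc: "U (r *\<^sub>R x) = r * U x" for r x using linear_scale[OF U(1)] by simp
    define f where "f x = of_real (U x) - of_real (U (sm j x)) * j" for x
    have re_f: "re (f y) = U y" for y
    proof -
      have "f y = of_real (U y) + of_real (- U (sm j y)) * j" unfolding f_def by simp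
      then show ?thesis using uniq by blast
    qed
    have fadd: "f (x + y) = f x + f y" for x y
      unfolding f_def V.scale_right_distrib Uadd by (simp add: algebra_simps)
    have fhom: "f (sm c x) = c * f x" for c x
    proof -
      obtain r s where c: "c = of_real r + of_real s * j" using jrep by blast
      have e1: "sm c x = r *\<^sub>R x + s *\<^sub>R sm j x"
        unfolding c V.scale_left_distrib V.scale_scale[symmetric] smr ..
      have "j * c = of_real r * j + of_real s * (j * j)"
        unfolding c by (simp add: algebra_simps)
      then have jc: "j * c = of_real (- s) + of_real r * j" unfolding jj by simp
      have "sm j (sm c x) = sm (j * c) x" by simp
      also have "\<dots> = sm (of_real (- s)) x + sm (of_real r) (sm j x)"
        unfolding jc V.scale_left_distrib by simp
      finally have e2: "sm j (sm c x) = (- s) *\<^sub>R x + r *\<^sub>R sm j x" unfolding smr .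
      have "f (sm c x) = of_real (r * U x + s * U (sm j x)) - of_real (- s * U x + r * U (sm j x)) * j"
        unfolding f_def e2 unfolding e1 Uadd Usc ..
      also have "\<dots> = c * f x" unfolding c f_def j_mult_id[OF jj] ..
      finally show ?thesis .
    qed
    have fb: "norm (f x) \<le> norm x" for x
    proof (cases "f x = 0")
      case True then show ?thesis by simp
    next
      case False
      define w where "w = of_real (norm (f x)) / f x"
      have nw: "norm w = 1" unfolding w_def using False by (simp add: norm_divide)
      have "f (sm w x) = of_real (norm (f x))" unfolding fhom w_def using False by simp
      then have "norm (f x) = re (f (sm w x))" using uniq[of "of_real (norm (f x))" "norm (f x)" 0] by simp
      also have "\<dots> = U (sm w x)" by (rule re_f)
      also have "\<dots> \<le> norm (sm w x)" using U(3) abs_le_D1 by blast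
      also have "\<dots> = norm x" unfolding smn nw by simp
      finally show ?thesis .
    qed
    have fext: "\<forall>w\<in>W. f w = g w"
    proof
      fix w assume wW: "w \<in> W"
      have "U w = re (g w)" using U(2) wW u_def by simp
      moreover have "U (sm j w) = - im (g w)" using U(2) Wsc[OF wW] u_def ghom[OF wW] re_j by simp
      ultimately show "f w = g w" unfolding f_def using rep[of "g w"] by simp
    qed
    show ?thesis using Kfun[OF fadd fhom fb] fext fb by blast
  qed
qed

lemma onorm_eq_1:
  assumes bl: "bounded_linear f" and b: "\<And>x. norm (f x) \<le> norm x" and z: "norm z = 1" "norm (f z) = 1"
  shows "onorm f = 1"
proof (rule antisym)
  show "onorm f \<le> 1" by (rule onorm_bound) (use b in simp_all)
  have "norm (f z) / norm z \<le> onorm f" by (rule le_onorm[OF bl])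
  then show "1 \<le> onorm f" using z by simp
qed

lemma support_functional:
  fixes sm :: "'k::real_normed_field \<Rightarrow> 'a::real_normed_vector \<Rightarrow> 'a"
  assumes KN: "K_normed_space sm" and z: "norm z = 1"
  shows "\<exists>f. K_functional sm f \<and> f z = 1 \<and> onorm f = 1 \<and> (\<forall>x. norm (f x) \<le> norm x)"
proof -
  have vs: "vector_space sm" and smn: "\<And>c x. norm (sm c x) = norm c * norm x"
    using KN unfolding K_normed_space_def by auto
  interpret V: vector_space sm by (rule vs)
  have z0: "z \<noteq> 0" using z by auto
  define W where "W = range (\<lambda>a. sm a z)"
  have WS: "V.subspace W" unfolding V.subspace_def W_def
  proof (intro conjI ballI allI)
    show "0 \<in> range (\<lambda>a. sm a z)" by (rule range_eqI[of _ _ 0]) simp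
    fix x y assume "x \<in> range (\<lambda>a. sm a z)" "y \<in> range (\<lambda>a. sm a z)"
    then obtain a b where "x = sm a z" "y = sm b z" by blast
    then show "x + y \<in> range (\<lambda>a. sm a z)" by (intro range_eqI[of _ _ "a + b"]) (simp add: V.scale_left_distrib)
  next
    fix c x assume "x \<in> range (\<lambda>a. sm a z)"
    then obtain a where "x = sm a z" by blast
    then show "sm c x \<in> range (\<lambda>a. sm a z)" by (intro range_eqI[of _ _ "c * a"]) simp
  qed
  define g where "g w = (THE a. w = sm a z)" for w
  have g_eq: "g (sm a z) = a" for a unfolding g_def
    by (rule the_equality) (use z0 in auto)
  have gadd: "g (u + w) = g u + g w" if "u \<in> W" "w \<in> W" for u w
  proof -
    from that obtain a b where "u = sm a z" "w = sm b z" unfolding W_def by blast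
    then show ?thesis using g_eq[of "a + b"] g_eq[of a] g_eq[of b] by (simp add: V.scale_left_distrib)
  qed
  have ghom: "g (sm c u) = c * g u" if "u \<in> W" for c u
  proof -
    from that obtain a where "u = sm a z" unfolding W_def by blast
    then show ?thesis using g_eq[of "c * a"] g_eq[of a] by simp
  qed
  have gb: "norm (g u) \<le> norm u" if "u \<in> W" for u
  proof -
    from that obtain a where "u = sm a z" unfolding W_def by blast
    then show ?thesis using g_eq[of a] smn z by simp
  qed
  obtain f where f: "K_functional sm f" "\<forall>w\<in>W. f w = g w" "\<forall>x. norm (f x) \<le> norm x"
    using K_HB[OF KN WS gadd ghom gb] by blast
  have "z \<in> W" unfolding W_def by (rule range_eqI[of _ _ 1]) simp
  then have fz: "f z = 1" using f(2) g_eq[of 1] by simp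
  have "onorm f = 1" by (rule onorm_eq_1) (use f z fz K_functional_def in auto)
  then show ?thesis using f fz by blast
qed

theorem lemma3p1:
  fixes sm :: "'k::{real_normed_field,banach} \<Rightarrow> 'a::banach \<Rightarrow> 'a"
    and V :: "'a set" and n :: nat and A A0 L :: "'a \<Rightarrow> 'a"
  assumes "K_normed_space sm"
    and "module.subspace sm V" and "vector_space.dim sm V = n" and "n \<ge> 1"
    and "K_bounded_op_on sm V A" and "numrad_on sm V A > 0"
    and "K_bounded_op sm A0" and "range A0 \<subseteq> V" and "\<forall>v\<in>V. A0 v = A v"
    and "L \<in> ZA sm V A0" and "L \<noteq> (\<lambda>x. 0)"
  shows "numrad sm L > 0"
proof -
  note KN = assms(1)
  have vs: "vector_space sm" and smr: "\<And>r x. sm (of_real r) x = r *\<^sub>R x"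
    and smn: "\<And>c x. norm (sm c x) = norm c * norm x"
    using KN unfolding K_normed_space_def by auto
  interpret VS: vector_space sm by (rule vs)
  have VW: "VS.subspace V" using assms(2) .
  have V0: "0 \<in> V" and Vadd: "\<And>x y. x\<in>V \<Longrightarrow> y\<in>V \<Longrightarrow> x+y\<in>V" and Vsc: "\<And>c x. x\<in>V \<Longrightarrow> sm c x \<in> V"
    using VW unfolding VS.subspace_def by auto
  from assms(10) obtain c L' where Ldef: "L = (\<lambda>x. sm c (A0 x) + L' x)" and L'BV: "L' \<in> BV sm V"
    unfolding ZA_def by blast
  have L'b: "K_bounded_op sm L'" and L'r: "range L' \<subseteq> V" and L'0: "\<And>v. v \<in> V \<Longrightarrow> L' v = 0"
    using L'BV unfolding BV_def by auto
  have bl_sm: "bounded_linear (sm d)" for d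
  proof (rule bounded_linear_intro[where K="norm d"])
    show "sm d (x + y) = sm d x + sm d y" for x y by (rule VS.scale_right_distrib)
    show "sm d (r *\<^sub>R x) = r *\<^sub>R sm d x" for r x
      using smr[of r x] smr[of r "sm d x"] by (metis VS.scale_scale mult.commute)
    show "norm (sm d x) \<le> norm x * norm d" for x by (simp add: smn mult.commute)
  qed
  have blA0: "bounded_linear A0" using assms(7) unfolding K_bounded_op_def by blast
  have blL': "bounded_linear L'" using L'b unfolding K_bounded_op_def by blast
  have blL: "bounded_linear L" unfolding Ldef
    by (intro bounded_linear_add bounded_linear_compose[OF bl_sm blA0] blL')
  define S where "S = {norm (f (L x)) | x f. norm x = 1 \<and> K_functional sm f \<and> onorm f = 1 \<and> f x = 1}"
  have Sbdd: "bdd_above S" unfolding bdd_above_def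
  proof (intro exI ballI)
    fix s assume "s \<in> S"
    then obtain x f where s: "s = norm (f (L x))" "norm x = 1" "K_functional sm f" "onorm f = 1" by (auto simp: S_def)
    have "bounded_linear f" using s(3) unfolding K_functional_def by blast
    then have "norm (f (L x)) \<le> onorm f * norm (L x)" by (rule onorm)
    also have "\<dots> \<le> 1 * (onorm L * norm x)" using s(4) onorm[OF blL, of x] by simp
    finally show "s \<le> onorm L" using s by simp
  qed
  have pos: "numrad sm L > 0" if "norm x = 1" "K_functional sm f" "onorm f = 1" "f x = 1" "f (L x) \<noteq> 0" for x f
  proof -
    have "norm (f (L x)) \<in> S" unfolding S_def using that by blast
    then have "norm (f (L x)) \<le> Sup S" by (rule cSup_upper[OF _ Sbdd])
    moreover have "norm (f (L x)) > 0" using that(5) by simp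
    moreover have "numrad sm L = Sup S" unfolding numrad_def S_def ..
    ultimately show ?thesis by linarith
  qed
  have Klin: "f (u + w) = f u + f w" "f (sm d u) = d * f u" if "K_functional sm f" for f :: "'a \<Rightarrow> 'k" and u w d
    using that unfolding K_functional_def Vector_Spaces.linear_iff by auto
  show ?thesis
  proof (cases "c = 0")
    case False
    define T where "T = {norm (g (A v)) | v g. v \<in> V \<and> norm v \<le> 1
      \<and> (\<forall>u\<in>V. \<forall>w\<in>V. g (u + w) = g u + g w)
      \<and> (\<forall>c. \<forall>u\<in>V. g (sm c u) = c * g u)
      \<and> (\<forall>u\<in>V. norm (g u) \<le> norm u)
      \<and> g v = 1}"
    have numT: "numrad_on sm V A = Sup T" unfolding numrad_on_def T_def ..
    have Tne: "T \<noteq> {}"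
    proof -
      obtain B where B: "B \<subseteq> V" "VS.independent B" "V \<subseteq> VS.span B" "card B = VS.dim V"
        by (rule VS.basis_exists)
      have "card B \<ge> 1" using B(4) assms(3,4) by simp
      then have "B \<noteq> {}" by auto
      then obtain b where b: "b \<in> B" by blast
      have bV: "b \<in> V" using b B by blast
      have b0: "b \<noteq> 0" using b B(2) VS.dependent_zero by blast
      define z where "z = sm (of_real (1 / norm b)) b"
      have zV: "z \<in> V" unfolding z_def by (rule Vsc[OF bV])
      have nz: "norm z = 1" unfolding z_def smn using b0 by (simp add: norm_divide)
      obtain f where f: "K_functional sm f" "f z = 1" "\<forall>x. norm (f x) \<le> norm x"
        using support_functional[OF KN nz] by blast
      have "norm (f (A z)) \<in> T" unfolding T_def
        apply (rule CollectI, rule exI[of _ z], rule exI[of _ f])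
        using zV nz f(2,3) Klin[OF f(1)] by simp
      then show ?thesis by blast
    qed
    obtain v g where vg: "v \<in> V" "norm v \<le> 1" "\<forall>u\<in>V. \<forall>w\<in>V. g (u + w) = g u + g w"
      "\<forall>c. \<forall>u\<in>V. g (sm c u) = c * g u" "\<forall>u\<in>V. norm (g u) \<le> norm u" "g v = 1" "norm (g (A v)) > 0"
    proof -
      have "\<exists>t\<in>T. t > 0"
      proof (rule ccontr)
        assume "\<not> (\<exists>t\<in>T. t > 0)"
        then have "Sup T \<le> 0" using Tne by (intro cSup_least) auto
        then show False using assms(6) numT by simp
      qed
      then obtain t where t: "t \<in> T" "t > 0" by blast
      then obtain v g where P: "t = norm (g (A v))" "v \<in> V \<and> norm v \<le> 1
        \<and> (\<forall>u\<in>V. \<forall>w\<in>V. g (u + w) = g u + g w)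
        \<and> (\<forall>c. \<forall>u\<in>V. g (sm c u) = c * g u)
        \<and> (\<forall>u\<in>V. norm (g u) \<le> norm u)
        \<and> g v = 1" unfolding T_def by blast
      show ?thesis by (rule that[of v g]) (use P t in simp_all)
    qed
    have "norm (g v) \<le> norm v" using vg(5) vg(1) by blast
    then have "1 \<le> norm v" using vg(6) by simp
    then have nv: "norm v = 1" using vg(2) by simp
    obtain f where f: "K_functional sm f" "\<forall>w\<in>V. f w = g w" "\<forall>x. norm (f x) \<le> norm x"
      using K_HB[OF KN VW, of g] vg by blast
    have fv: "f v = 1" using f(2) vg(1,6) by simp
    have of1: "onorm f = 1"
      by (rule onorm_eq_1) (use f nv fv K_functional_def in auto)
    have AvV: "A v \<in> V" using assms(5) vg(1) unfolding K_bounded_op_on_def by blast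
    have "f (L v) = c * g (A v)"
    proof -
      have "L v = sm c (A v)" unfolding Ldef using L'0[OF vg(1)] assms(9) vg(1) by simp
      then show ?thesis using Klin(2)[OF f(1)] f(2) AvV by simp
    qed
    then have "f (L v) \<noteq> 0" using False vg(7) by simp
    then show ?thesis using pos[OF nv f(1) of1 fv] by blast
  next
    case True
    then have LL': "L = L'" unfolding Ldef by simp
    obtain x0 where x0: "L' x0 \<noteq> 0" using assms(11) LL' by auto
    define y where "y = L' x0"
    have yV: "y \<in> V" using L'r unfolding y_def by blast
    have Ly: "L' y = 0" using L'0[OF yV] .
    have ny: "norm y > 0" using x0 y_def by simp
    define t where "t = (2 * norm x0 + 1) / norm y"
    define z where "z = x0 + t *\<^sub>R y"
    have "2 * norm x0 + 1 > 0" using norm_ge_zero[of x0] by linarith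
    then have tpos: "t > 0" unfolding t_def using ny by (rule divide_pos_pos)
    have "norm (t *\<^sub>R y) = 2 * norm x0 + 1" unfolding t_def using ny by simp
    moreover have "norm (t *\<^sub>R y) \<le> norm z + norm x0"
      using norm_triangle_ineq4[of z x0] unfolding z_def by simp
    ultimately have nz_big: "norm z > norm x0" by linarith
    then have z0: "z \<noteq> 0" by (metis norm_ge_zero norm_zero not_less)
    have Lz: "L' z = y" unfolding z_def
      using linear_add[OF bounded_linear.linear[OF blL']] linear_scale[OF bounded_linear.linear[OF blL']] Ly y_def by simp
    define e where "e = (1 / norm z) *\<^sub>R z"
    have ne: "norm e = 1" unfolding e_def using z0 by simp
    obtain f where f: "K_functional sm f" "f e = 1" "onorm f = 1" "\<forall>x. norm (f x) \<le> norm x"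
      using support_functional[OF KN ne] by blast
    have blf: "bounded_linear f" using f(1) unfolding K_functional_def by blast
    show ?thesis
    proof (cases "f (L e) = 0")
      case False
      then show ?thesis using pos[OF ne f(1) f(3) f(2)] by blast
    next
      case True
      have "L e = (1 / norm z) *\<^sub>R y" unfolding LL' e_def using linear_scale[OF bounded_linear.linear[OF blL']] Lz by simp
      then have "(1 / norm z) *\<^sub>R f y = 0" using True linear_scale[OF bounded_linear.linear[OF blf]] by simp
      then have fy: "f y = 0" using z0 by simp
      have "z = norm z *\<^sub>R e" unfolding e_def using z0 by simp
      then have "f z = norm z *\<^sub>R 1" using linear_scale[OF bounded_linear.linear[OF blf]] f(2) by metis
      then have "norm (f z) = norm z" by simp
      moreover have "f z = f x0" unfolding z_def
        using linear_add[OF bounded_linear.linear[OF blf]] linear_scale[OF bounded_linear.linear[OF blf]] fy by simp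
      ultimately have "norm z \<le> norm x0" using f(4) by metis
      then show ?thesis using nz_big by simp
    qed
  qed
qed

end
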